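(* Let $\eta$ be a generalized strategy in the game $\Gamma(F,G)$. Then there exists a cutoff strategy $\tilde\eta$ such that either $\eta$ is equivalent to $\tilde\eta$, or $\eta$ is strictly dominated by $\tilde\eta$, i.e., $\pi(\eta,\eta')<\pi(\tilde\eta,\eta')$ for every generalized strategy $\eta'$ of the opponent.
   Context: Game $\Gamma(F,G)$ without communication: player 1's type $u$ is drawn from a distribution on $[0,1]$ with continuous (atomless) CDF $F$ and density $f$; player 2's type independently from a CDF $G$ on $[0,1]$. Each chooses $L$ or $R$; a player of type $u$ gets $1-u$ if both choose $L$, $u$ if both choose $R$, and $0$ otherwise. A generalized strategy of player 1 is a measurable $\eta:[0,1]\to\Delta(\{L,R\})$, with $\eta_u(L)$ the probability type $u$ plays $L$; a generalized strategy $\eta'$ of player 2 is defined likewise on her types. $\pi(\eta,\eta')$ is player 1's ex-ante expected payoff (type $u\sim F$, opponent type $\sim G$). $\eta$ and $\tilde\eta$ are equivalent if $\int_0^1 f(u)\mathbf 1\{\eta(u)\ne\tilde\eta(u)\}du=0$. A cutoff strategy is one for which there is $x\in[0,1]$ with $\eta(u)=L$ for all $u<x$ and $\eta(u)=R$ for all $u>x$. *)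

theory Defs
  imports "HOL-Probability.Probability"
begin

text \<open>Player 1's type distribution: density f on [0,1] (CDF F u = integral of f over [0,u]).\<close>
definition type_density :: "(real \<Rightarrow> real) \<Rightarrow> bool" where
  "type_density f \<longleftrightarrow> f \<in> borel_measurable lborel \<and> (\<forall>u\<in>{0..1}. 0 \<le> f u)
     \<and> set_integrable lborel {0..1} f \<and> (LINT u:{0..1}|lborel. f u) = 1"

definition type_distribution :: "real measure \<Rightarrow> bool" where
  "type_distribution G \<longleftrightarrow> prob_space G \<and> sets G = sets borel \<and> measure G {0..1} = 1"

text \<open>Generalized strategy: eta u is the probability that type u plays L.\<close>
definition gen_strategy :: "(real \<Rightarrow> real) \<Rightarrow> bool" where
  "gen_strategy \<eta> \<longleftrightarrow> \<eta> \<in> borel_measurable (restrict_space borel {0..1})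
     \<and> (\<forall>u\<in>{0..1}. 0 \<le> \<eta> u \<and> \<eta> u \<le> 1)"

definition cutoff_strategy :: "(real \<Rightarrow> real) \<Rightarrow> bool" where
  "cutoff_strategy \<eta> \<longleftrightarrow> gen_strategy \<eta> \<and>
     (\<exists>x\<in>{0..1}. \<forall>u\<in>{0..1}. (u < x \<longrightarrow> \<eta> u = 1) \<and> (x < u \<longrightarrow> \<eta> u = 0))"

definition strat_equiv :: "(real \<Rightarrow> real) \<Rightarrow> (real \<Rightarrow> real) \<Rightarrow> (real \<Rightarrow> real) \<Rightarrow> bool" where
  "strat_equiv f \<eta> \<eta>' \<longleftrightarrow> (LINT u:{0..1}|lborel. f u * indicator {v. \<eta> v \<noteq> \<eta>' v} u) = 0"

definition opp_L :: "real measure \<Rightarrow> (real \<Rightarrow> real) \<Rightarrow> real" where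
  "opp_L G \<eta>' = (LINT v:{0..1}|G. \<eta>' v)"

definition payoff :: "(real \<Rightarrow> real) \<Rightarrow> real measure \<Rightarrow> (real \<Rightarrow> real) \<Rightarrow> (real \<Rightarrow> real) \<Rightarrow> real" where
  "payoff f G \<eta> \<eta>' = (LINT u:{0..1}|lborel. f u *
      (\<eta> u * opp_L G \<eta>' * (1 - u) + (1 - \<eta> u) * (1 - opp_L G \<eta>') * u))"

end

theory Submission
  imports Defs
begin

lemma si:
  assumes f: "type_density f"
    and h: "h \<in> borel_measurable (restrict_space borel {0..1})"
    and hb: "\<And>u. u \<in> {0..1} \<Longrightarrow> \<bar>h u\<bar> \<le> C"
  shows "set_integrable lborel {0..1::real} (\<lambda>u. f u * h u)"
proof -
  have fm: "f \<in> borel_measurable borel" and fn: "\<And>u. u \<in> {0..1} \<Longrightarrow> 0 \<le> f u"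
    and fi: "set_integrable lborel {0..1} f"
    using f unfolding type_density_def by auto
  have hm: "(\<lambda>x. indicator {0..1} x *\<^sub>R h x) \<in> borel_measurable borel"
    using h by (subst (asm) borel_measurable_restrict_space_iff) auto
  have i1: "integrable lborel (\<lambda>u. C * (indicator {0..1} u * f u))"
    using fi unfolding set_integrable_def by auto
  show ?thesis
    unfolding set_integrable_def
  proof (rule Bochner_Integration.integrable_bound[OF i1])
    have "(\<lambda>u. indicator {0..1} u *\<^sub>R (f u * h u)) = (\<lambda>u. f u * (indicator {0..1} u *\<^sub>R h u))"
      by (auto simp: indicator_def)
    then show "(\<lambda>u. indicator {0..1} u *\<^sub>R (f u * h u)) \<in> borel_measurable lborel"
      using fm hm by simp
    show "AE x in lborel. norm (indicator {0..1} x *\<^sub>R (f x * h x)) \<le> norm (C * (indicator {0..1} x * f x))"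
    proof (rule AE_I2)
      fix x show "norm (indicator {0..1} x *\<^sub>R (f x * h x)) \<le> norm (C * (indicator {0..1} x * f x))"
      proof (cases "x \<in> {0..1}")
        case True
        then have "\<bar>f x * h x\<bar> \<le> \<bar>C * f x\<bar>" using fn[OF True] hb[OF True]
          by (simp add: abs_mult) (metis mult.commute mult_left_mono)
        then show ?thesis using True by simp
      qed simp
    qed
  qed
qed

theorem lemmaA1:
  fixes f :: "real \<Rightarrow> real" and G :: "real measure" and \<eta> :: "real \<Rightarrow> real"
  assumes "type_density f" and "type_distribution G" and "gen_strategy \<eta>"
  shows "\<exists>\<eta>c. cutoff_strategy \<eta>c \<and>
           (strat_equiv f \<eta> \<eta>c \<or>
            (\<forall>\<eta>'. gen_strategy \<eta>' \<longrightarrow> payoff f G \<eta> \<eta>' < payoff f G \<eta>c \<eta>'))"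
proof -
  note fd = assms(1)
  have fm: "f \<in> borel_measurable borel" and fn: "\<And>u. u \<in> {0..1} \<Longrightarrow> 0 \<le> f u"
    and fi: "set_integrable lborel {0..1} f" and f1: "(LINT u:{0..1}|lborel. f u) = 1"
    using fd unfolding type_density_def by auto
  have em[measurable]: "\<eta> \<in> borel_measurable (restrict_space borel {0..1})"
    and eb: "\<And>u. u \<in> {0..1} \<Longrightarrow> 0 \<le> \<eta> u \<and> \<eta> u \<le> 1"
    using assms(3) unfolding gen_strategy_def by auto
  have idm[measurable]: "(\<lambda>u::real. u) \<in> borel_measurable (restrict_space borel {0..1})"
    by (rule measurable_restrict_space1) simp
  define m where "m = (LINT u:{0..1}|lborel. f u * \<eta> u)"
  define H where "H = (\<lambda>x. integral {0..x} f)"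
  have fint: "f integrable_on {0..1}" using set_borel_integral_eq_integral(1)[OF fi] .
  have Hc: "continuous_on {0..1} H" unfolding H_def by (rule indefinite_integral_continuous_1[OF fint])
  have H0: "H 0 = 0" unfolding H_def by simp
  have H1: "H 1 = 1" unfolding H_def using set_borel_integral_eq_integral(2)[OF fi] f1 by simp
  have sie: "set_integrable lborel {0..1} (\<lambda>u. f u * \<eta> u)"
    by (rule si[OF fd em, of 1]) (use eb in auto)
  have m0: "0 \<le> m" unfolding m_def set_lebesgue_integral_def
    by (rule integral_nonneg_AE, rule AE_I2) (use fn eb in \<open>auto simp: indicator_def\<close>)
  have m1: "m \<le> 1"
  proof -
    have "m \<le> (LINT u:{0..1}|lborel. f u)" unfolding m_def set_lebesgue_integral_def
    proof (rule integral_mono)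
      show "integrable lborel (\<lambda>x. indicat_real {0..1} x *\<^sub>R (f x * \<eta> x))"
        using sie unfolding set_integrable_def .
      show "integrable lborel (\<lambda>x. indicat_real {0..1} x *\<^sub>R f x)"
        using fi unfolding set_integrable_def .
      fix u show "indicat_real {0..1} u *\<^sub>R (f u * \<eta> u) \<le> indicat_real {0..1} u *\<^sub>R f u"
        using fn[of u] eb[of u] by (auto simp: indicator_def intro: mult_left_le)
    qed
    then show ?thesis using f1 by simp
  qed
  obtain x where x0: "0 \<le> x" and x1: "x \<le> 1" and Hx: "H x = m"
    using IVT'[of H 0 m 1] Hc H0 H1 m0 m1 by auto
  define ec where "ec = (\<lambda>u::real. if u \<le> x then 1 else (0::real))"
  have ecm[measurable]: "ec \<in> borel_measurable (restrict_space borel {0..1})"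
    unfolding ec_def by (rule measurable_restrict_space1) measurable
  have ecb: "\<And>u. 0 \<le> ec u \<and> ec u \<le> 1" unfolding ec_def by auto
  have cut: "cutoff_strategy ec"
    unfolding cutoff_strategy_def gen_strategy_def using ecm ecb x0 x1
    by (auto simp: ec_def intro!: bexI[of _ x])
  have siec: "set_integrable lborel {0..1} (\<lambda>u. f u * ec u)"
    by (rule si[OF fd ecm, of 1]) (use ecb in auto)
  have fix': "set_integrable lborel {0..x} f"
    by (rule set_integrable_subset[OF fi]) (use x1 in auto)
  have intec: "(LINT u:{0..1}|lborel. f u * ec u) = m"
  proof -
    have "(LINT u:{0..1}|lborel. f u * ec u) = (LINT u:{0..x}|lborel. f u)"
      unfolding set_lebesgue_integral_def
      by (rule Bochner_Integration.integral_cong) (use x0 x1 in \<open>auto simp: indicator_def ec_def\<close>)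
    also have "\<dots> = H x" unfolding H_def using set_borel_integral_eq_integral(2)[OF fix'] .
    finally show ?thesis using Hx by simp
  qed
  define g where "g = (\<lambda>u. f u * ((ec u - \<eta> u) * (x - u)))"
  have gi: "set_integrable lborel {0..1} g"
    unfolding g_def
  proof (rule si[OF fd, of _ 1])
    show "(\<lambda>u. (ec u - \<eta> u) * (x - u)) \<in> borel_measurable (restrict_space borel {0..1})"
      by measurable
    fix u :: real assume u: "u \<in> {0..1}"
    have "\<bar>ec u - \<eta> u\<bar> \<le> 1" using ecb[of u] eb[OF u] by auto
    moreover have "\<bar>x - u\<bar> \<le> 1" using u x0 x1 by auto
    ultimately show "\<bar>(ec u - \<eta> u) * (x - u)\<bar> \<le> 1"
      by (simp add: abs_mult) (metis abs_ge_zero mult_le_one)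
  qed
  have gnn: "\<And>u. u \<in> {0..1} \<Longrightarrow> 0 \<le> g u"
  proof -
    fix u :: real assume u: "u \<in> {0..1}"
    have "0 \<le> (ec u - \<eta> u) * (x - u)"
    proof (cases "u \<le> x")
      case True then show ?thesis using eb[OF u] by (simp add: ec_def)
    next
      case False then show ?thesis using eb[OF u] by (simp add: ec_def mult_nonneg_nonpos)
    qed
    then show "0 \<le> g u" unfolding g_def using fn[OF u] by simp
  qed
  have gI: "integrable lborel (\<lambda>u. indicator {0..1} u *\<^sub>R g u)"
    using gi unfolding set_integrable_def .
  have gAE: "AE u in lborel. 0 \<le> indicator {0..1} u *\<^sub>R g u"
    by (rule AE_I2) (auto simp: indicator_def intro: gnn)
  have intg0: "0 \<le> (LINT u:{0..1}|lborel. g u)"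
    unfolding set_lebesgue_integral_def by (rule integral_nonneg_AE[OF gAE])
  show ?thesis
  proof (cases "(LINT u:{0..1}|lborel. g u) = 0")
    case True
    then have "AE u in lborel. indicator {0..1} u *\<^sub>R g u = 0"
      using integral_nonneg_eq_0_iff_AE[OF gI gAE] unfolding set_lebesgue_integral_def by simp
    then have "AE u in lborel. indicator {0..1} u *\<^sub>R g u = 0 \<and> u \<noteq> x"
      using AE_lborel_singleton[of x] by eventually_elim auto
    then have "AE u in lborel. indicator {0..1} u *\<^sub>R (f u * indicator {v. \<eta> v \<noteq> ec v} u) = 0"
    proof eventually_elim
      case (elim u)
      show ?case
      proof (cases "u \<in> {0..1}")
        case True
        have "f u * ((ec u - \<eta> u) * (x - u)) = 0" using elim True unfolding g_def
          by (simp only: indicator_simps scaleR_one)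
        then have "f u = 0 \<or> ec u = \<eta> u"
        proof -
          have ne: "x - u \<noteq> 0" using elim by simp
          show ?thesis using ne \<open>f u * ((ec u - \<eta> u) * (x - u)) = 0\<close> by simp
        qed
        then show ?thesis by (auto simp: indicator_def)
      qed simp
    qed
    then have "strat_equiv f \<eta> ec"
      unfolding strat_equiv_def set_lebesgue_integral_def by (rule integral_eq_zero_AE)
    then show ?thesis using cut by blast
  next
    case False
    then have gpos: "0 < (LINT u:{0..1}|lborel. g u)" using intg0 by simp
    have "\<forall>\<eta>'. gen_strategy \<eta>' \<longrightarrow> payoff f G \<eta> \<eta>' < payoff f G ec \<eta>'"
    proof (intro allI impI)
      fix \<eta>' :: "real \<Rightarrow> real"
      define p where "p = opp_L G \<eta>'"
      have P: "set_integrable lborel {0..1} (\<lambda>u. f u * (h u * p * (1 - u) + (1 - h u) * (1 - p) * u))"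
        if hm: "h \<in> borel_measurable (restrict_space borel {0..1})" and hb: "\<And>u. 0 \<le> h u \<and> h u \<le> 1 \<or> u \<notin> {0..1}"
        for h
      proof (rule si[OF fd, of _ "1 + 2 * \<bar>p\<bar>"])
        show "(\<lambda>u. h u * p * (1 - u) + (1 - h u) * (1 - p) * u) \<in> borel_measurable (restrict_space borel {0..1})"
          using hm by measurable
        fix u :: real assume u: "u \<in> {0..1}"
        have h01: "0 \<le> h u" "h u \<le> 1" using hb[of u] u by auto
        have a: "\<bar>h u * p * (1 - u)\<bar> \<le> \<bar>p\<bar>"
          using h01 u by (simp add: abs_mult) (smt (verit) mult_le_one mult_nonneg_nonneg abs_ge_zero mult.commute mult.left_commute mult_left_le)
        have b: "\<bar>(1 - h u) * (1 - p) * u\<bar> \<le> 1 + \<bar>p\<bar>"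
          using h01 u by (simp add: abs_mult) (smt (verit) mult_le_one mult_nonneg_nonneg abs_ge_zero mult.commute mult.left_commute mult_left_le)
        show "\<bar>h u * p * (1 - u) + (1 - h u) * (1 - p) * u\<bar> \<le> 1 + 2 * \<bar>p\<bar>"
          using a b by linarith
      qed
      have Pc: "set_integrable lborel {0..1} (\<lambda>u. f u * (ec u * p * (1 - u) + (1 - ec u) * (1 - p) * u))"
        by (rule P[OF ecm]) (use ecb in auto)
      have Pe: "set_integrable lborel {0..1} (\<lambda>u. f u * (\<eta> u * p * (1 - u) + (1 - \<eta> u) * (1 - p) * u))"
        by (rule P[OF em]) (use eb in auto)
      have Di: "set_integrable lborel {0..1} (\<lambda>u. f u * ((p - x) * (ec u - \<eta> u)))"
      proof (rule si[OF fd, of _ "\<bar>p - x\<bar>"])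
        show "(\<lambda>u. (p - x) * (ec u - \<eta> u)) \<in> borel_measurable (restrict_space borel {0..1})"
          by measurable
        fix u :: real assume u: "u \<in> {0..1}"
        have "\<bar>ec u - \<eta> u\<bar> \<le> 1" using ecb[of u] eb[OF u] by auto
        then show "\<bar>(p - x) * (ec u - \<eta> u)\<bar> \<le> \<bar>p - x\<bar>"
          by (simp add: abs_mult mult_left_le)
      qed
      have D0: "(LINT u:{0..1}|lborel. f u * ((p - x) * (ec u - \<eta> u))) = 0"
      proof -
        have "(LINT u:{0..1}|lborel. f u * ((p - x) * (ec u - \<eta> u)))
            = (LINT u:{0..1}|lborel. (p - x) * (f u * ec u - f u * \<eta> u))"
          by (rule set_lebesgue_integral_cong) (auto simp: algebra_simps)
        also have "\<dots> = (p - x) * ((LINT u:{0..1}|lborel. f u * ec u) - (LINT u:{0..1}|lborel. f u * \<eta> u))"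
          using set_integral_diff(2)[OF siec sie] by simp
        also have "\<dots> = 0" using intec m_def by simp
        finally show ?thesis .
      qed
      have "payoff f G ec \<eta>' - payoff f G \<eta> \<eta>'
          = (LINT u:{0..1}|lborel. f u * (ec u * p * (1 - u) + (1 - ec u) * (1 - p) * u)
               - f u * (\<eta> u * p * (1 - u) + (1 - \<eta> u) * (1 - p) * u))"
        unfolding payoff_def p_def[symmetric] using set_integral_diff(2)[OF Pc Pe] by simp
      also have "\<dots> = (LINT u:{0..1}|lborel. g u + f u * ((p - x) * (ec u - \<eta> u)))"
        by (rule set_lebesgue_integral_cong) (auto simp: g_def algebra_simps)
      also have "\<dots> = (LINT u:{0..1}|lborel. g u)"
        using set_integral_add(2)[OF gi Di] D0 by simp
      finally show "payoff f G \<eta> \<eta>' < payoff f G ec \<eta>'" using gpos by simp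
    qed
    then show ?thesis using cut by blast
  qed
qed

end
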